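(* Consider the setting described in the context, with $\beta>0$, budget $C>1$, and $\xi\in(0,C-1]$. Let $\mathcal{L}_\beta^{\lambda}:=\max_{\pi\in\Pi}\mathcal{L}_\beta(\pi,\lambda)$ and let $\lambda^\ast\in\arg\min_{\lambda\ge0}\mathcal{L}_\beta^{\lambda}$ be an optimal dual variable. Then $$0\le\lambda^\ast\le\frac{\mathcal{L}_\beta^{\lambda^\ast}-\mathbb{P}_{(z,l)\sim\underline{\rho}}(\Phi_0(z)=l)}{\xi},$$ and hence the set $\Lambda^\ast$ of all optimal dual variables is bounded.
   Context: Let $\mathcal{Z}$ be a set of inputs and labels $l\in\{0,1\}$. Two judge functions $\Phi_0,\Phi_1:\mathcal{Z}\to\{0,1\}$ are given. The reward is $r(z,a,l)=\mathbb{I}(\Phi_a(z)=l)$ and the cost is $c:\mathcal{Z}\times\{0,1\}\to[0,\infty)$ with $c(z,0)=1$ for all $z$. Let $\rho,\underline{\rho},\overline{\rho}$ be fixed distributions on $\mathcal{Z}\times\{0,1\}$. A policy $\pi$ assigns to each $z$ a distribution $\pi(\cdot\mid z)$ on $\{0,1\}$; $\Pi$ is a class of policies containing the policy $\pi_0$ with $\pi_0(0\mid z)=1$ for all $z$. Entropy: $\mathcal{H}(\pi):=\mathbb{E}_{(z,l)\sim\rho}\big[-\sum_{a}\pi(a\mid z)\log\pi(a\mid z)\big]$. Regularized Lagrangian: $$\mathcal{L}_\beta(\pi,\lambda)=\mathbb{E}_{(z,l)\sim\underline{\rho},a\sim\pi(\cdot\mid z)}[r(z,a,l)]-\lambda\Big(\mathbb{E}_{(z,l)\sim\overline{\rho},a\sim\pi(\cdot\mid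 z)}[c(z,a)]-C\Big)+\beta\Big(\mathcal{H}(\pi)+\tfrac12\lambda^2\Big).$$ *)

theory Defs
  imports "HOL-Probability.Probability"
begin

(* Labels and actions in {0,1} are encoded as bool (False = 0, True = 1).
   A policy is pi :: 'z => bool => real, pi z a = pi(a|z). *)

definition is_policy :: "('z \<Rightarrow> bool \<Rightarrow> real) \<Rightarrow> bool" where
  "is_policy \<pi> \<longleftrightarrow> (\<forall>z a. 0 \<le> \<pi> z a) \<and> (\<forall>z. \<pi> z False + \<pi> z True = 1)"

definition pi0 :: "'z \<Rightarrow> bool \<Rightarrow> real" where
  "pi0 z a = (if a then 0 else 1)"

definition reward :: "(bool \<Rightarrow> 'z \<Rightarrow> bool) \<Rightarrow> 'z \<Rightarrow> bool \<Rightarrow> bool \<Rightarrow> real" where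
  "reward \<Phi> z a l = (if \<Phi> a z = l then 1 else 0)"

(* entropy H(pi) = E_{(z,l)~rho}[ - sum_a pi(a|z) log pi(a|z) ]  (ln 0 = 0 in Isabelle, so 0 log 0 = 0) *)
definition entropy :: "('z \<times> bool) measure \<Rightarrow> ('z \<Rightarrow> bool \<Rightarrow> real) \<Rightarrow> real" where
  "entropy \<rho> \<pi> = (\<integral>x. - (\<Sum>a\<in>UNIV. \<pi> (fst x) a * ln (\<pi> (fst x) a)) \<partial>\<rho>)"

definition lagrangian ::
  "('z \<times> bool) measure \<Rightarrow> ('z \<times> bool) measure \<Rightarrow> ('z \<times> bool) measure \<Rightarrow>
   (bool \<Rightarrow> 'z \<Rightarrow> bool) \<Rightarrow> ('z \<Rightarrow> bool \<Rightarrow> real) \<Rightarrow> real \<Rightarrow> real \<Rightarrow>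
   ('z \<Rightarrow> bool \<Rightarrow> real) \<Rightarrow> real \<Rightarrow> real" where
  "lagrangian \<rho> \<rho>l \<rho>u \<Phi> c C \<beta> \<pi> lam =
     (\<integral>x. (\<Sum>a\<in>UNIV. \<pi> (fst x) a * reward \<Phi> (fst x) a (snd x)) \<partial>\<rho>l)
     - lam * ((\<integral>x. (\<Sum>a\<in>UNIV. \<pi> (fst x) a * c (fst x) a) \<partial>\<rho>u) - C)
     + \<beta> * (entropy \<rho> \<pi> + 1/2 * lam\<^sup>2)"

definition dual_fun ::
  "('z \<times> bool) measure \<Rightarrow> ('z \<times> bool) measure \<Rightarrow> ('z \<times> bool) measure \<Rightarrow>
   (bool \<Rightarrow> 'z \<Rightarrow> bool) \<Rightarrow> ('z \<Rightarrow> bool \<Rightarrow> real) \<Rightarrow> real \<Rightarrow> real \<Rightarrow>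
   ('z \<Rightarrow> bool \<Rightarrow> real) set \<Rightarrow> real \<Rightarrow> real" where
  "dual_fun \<rho> \<rho>l \<rho>u \<Phi> c C \<beta> Pol lam = (SUP \<pi>\<in>Pol. lagrangian \<rho> \<rho>l \<rho>u \<Phi> c C \<beta> \<pi> lam)"

definition optimal_duals ::
  "('z \<times> bool) measure \<Rightarrow> ('z \<times> bool) measure \<Rightarrow> ('z \<times> bool) measure \<Rightarrow>
   (bool \<Rightarrow> 'z \<Rightarrow> bool) \<Rightarrow> ('z \<Rightarrow> bool \<Rightarrow> real) \<Rightarrow> real \<Rightarrow> real \<Rightarrow>
   ('z \<Rightarrow> bool \<Rightarrow> real) set \<Rightarrow> real set" where
  "optimal_duals \<rho> \<rho>l \<rho>u \<Phi> c C \<beta> Pol =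
     {lam. 0 \<le> lam \<and> (\<forall>\<mu>\<ge>0. dual_fun \<rho> \<rho>l \<rho>u \<Phi> c C \<beta> Pol lam \<le> dual_fun \<rho> \<rho>l \<rho>u \<Phi> c C \<beta> Pol \<mu>)}"

end

theory Submission
  imports Defs
begin

lemma int_le_one:
  assumes "prob_space M" and "\<And>x. f x \<le> (1::real)"
  shows "integral\<^sup>L M f \<le> 1"
proof (cases "integrable M f")
  case True
  have "integral\<^sup>L M f \<le> integral\<^sup>L M (\<lambda>x. 1)"
    by (rule integral_mono) (use True assms in \<open>auto intro: finite_measure.integrable_const prob_space.finite_measure\<close>)
  also have "\<dots> = 1" using assms(1) by (simp add: prob_space.prob_space)
  finally show ?thesis .
next
  case False
  then show ?thesis by (simp add: not_integrable_integral_eq)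
qed

lemma negxlnx: "0 \<le> (p::real) \<Longrightarrow> - (p * ln p) \<le> 1 - p"
proof (cases "p = 0")
  case False
  assume p: "0 \<le> p"
  then have pp: "0 < p" using False by simp
  have "ln (1/p) \<le> 1/p - 1" using pp by (intro ln_le_minus_one) simp
  then have "- ln p \<le> 1/p - 1" using pp by (simp add: ln_div)
  then have "p * (- ln p) \<le> p * (1/p - 1)" using pp by (intro mult_left_mono) auto
  then show ?thesis using pp by (simp add: algebra_simps)
qed simp

lemma lag_bound:
  assumes "prob_space \<rho>" "prob_space \<rho>l" "\<forall>z a. 0 \<le> c z a" "is_policy \<pi>" "0 \<le> lam" "\<beta> > 0"
  shows "lagrangian \<rho> \<rho>l \<rho>u \<Phi> c C \<beta> \<pi> lam \<le> 1 + lam * C + \<beta> * (1 + 1/2 * lam\<^sup>2)"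
proof -
  have pol: "\<And>z a. 0 \<le> \<pi> z a" "\<And>z. \<pi> z False + \<pi> z True = 1"
    using assms(4) unfolding is_policy_def by auto
  have r: "(\<integral>x. (\<Sum>a\<in>UNIV. \<pi> (fst x) a * reward \<Phi> (fst x) a (snd x)) \<partial>\<rho>l) \<le> 1"
  proof (rule int_le_one[OF assms(2)])
    fix x :: "'a \<times> bool"
    have "\<pi> (fst x) False * reward \<Phi> (fst x) False (snd x) \<le> \<pi> (fst x) False"
         "\<pi> (fst x) True * reward \<Phi> (fst x) True (snd x) \<le> \<pi> (fst x) True"
      using pol(1)[of "fst x"] by (auto simp: reward_def)
    then show "(\<Sum>a\<in>UNIV. \<pi> (fst x) a * reward \<Phi> (fst x) a (snd x)) \<le> 1"
      using pol(2)[of "fst x"] by (simp add: UNIV_bool)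
  qed
  have cst: "0 \<le> (\<integral>x. (\<Sum>a\<in>UNIV. \<pi> (fst x) a * c (fst x) a) \<partial>\<rho>u)"
    using pol(1) assms(3) by (intro integral_nonneg_AE AE_I2 sum_nonneg mult_nonneg_nonneg) auto
  have e: "entropy \<rho> \<pi> \<le> 1"
    unfolding entropy_def
  proof (rule int_le_one[OF assms(1)])
    fix x :: "'a \<times> bool"
    have "- (\<pi> (fst x) False * ln (\<pi> (fst x) False)) \<le> 1 - \<pi> (fst x) False"
         "- (\<pi> (fst x) True * ln (\<pi> (fst x) True)) \<le> 1 - \<pi> (fst x) True"
      using pol(1) by (auto intro: negxlnx)
    then show "- (\<Sum>a\<in>UNIV. \<pi> (fst x) a * ln (\<pi> (fst x) a)) \<le> 1"
      using pol(2)[of "fst x"] by (simp add: UNIV_bool)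
  qed
  have "- lam * ((\<integral>x. (\<Sum>a\<in>UNIV. \<pi> (fst x) a * c (fst x) a) \<partial>\<rho>u) - C) \<le> lam * C"
    using cst assms(5) by (simp add: algebra_simps)
  moreover have "\<beta> * (entropy \<rho> \<pi> + 1/2 * lam\<^sup>2) \<le> \<beta> * (1 + 1/2 * lam\<^sup>2)"
    using e assms(6) by simp
  ultimately show ?thesis using r unfolding lagrangian_def by linarith
qed

lemma lag_pi0:
  assumes "prob_space \<rho>" "prob_space \<rho>l" "prob_space \<rho>u" "\<forall>z. c z False = 1"
    "{x \<in> space \<rho>l. \<Phi> False (fst x) = snd x} \<in> sets \<rho>l"
  shows "lagrangian \<rho> \<rho>l \<rho>u \<Phi> c C \<beta> pi0 lam =
     measure \<rho>l {x \<in> space \<rho>l. \<Phi> False (fst x) = snd x} - lam * (1 - C) + \<beta> * (1/2 * lam\<^sup>2)"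
proof -
  let ?A = "{x \<in> space \<rho>l. \<Phi> False (fst x) = snd x}"
  have "(\<integral>x. (\<Sum>a\<in>UNIV. pi0 (fst x) a * reward \<Phi> (fst x) a (snd x)) \<partial>\<rho>l)
        = (\<integral>x. indicator ?A x \<partial>\<rho>l)"
    by (rule Bochner_Integration.integral_cong) (auto simp: UNIV_bool pi0_def reward_def indicator_def)
  also have "\<dots> = measure \<rho>l ?A" using assms(5) by simp
  finally have r: "(\<integral>x. (\<Sum>a\<in>UNIV. pi0 (fst x) a * reward \<Phi> (fst x) a (snd x)) \<partial>\<rho>l) = measure \<rho>l ?A" .
  have "(\<integral>x. (\<Sum>a\<in>UNIV. pi0 (fst x) a * c (fst x) a) \<partial>\<rho>u) = (\<integral>x. 1 \<partial>\<rho>u)"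
    using assms(4) by (simp add: UNIV_bool pi0_def)
  also have "\<dots> = 1" using assms(3) by (simp add: prob_space.prob_space)
  finally have cc: "(\<integral>x. (\<Sum>a\<in>UNIV. pi0 (fst x) a * c (fst x) a) \<partial>\<rho>u) = 1" .
  have e: "entropy \<rho> pi0 = 0"
    unfolding entropy_def by (simp add: UNIV_bool pi0_def)
  show ?thesis unfolding lagrangian_def r cc e by simp
qed

theorem lemmaA3:
  fixes \<rho> \<rho>l \<rho>u :: "('z \<times> bool) measure"
    and \<Phi> :: "bool \<Rightarrow> 'z \<Rightarrow> bool"
    and c :: "'z \<Rightarrow> bool \<Rightarrow> real"
    and C \<beta> \<xi> lamstar :: real
    and Pol :: "('z \<Rightarrow> bool \<Rightarrow> real) set"
  assumes "prob_space \<rho>" and "prob_space \<rho>l" and "prob_space \<rho>u"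
    and "\<forall>z a. 0 \<le> c z a" and "\<forall>z. c z False = 1"
    and "\<forall>\<pi>\<in>Pol. is_policy \<pi>" and "pi0 \<in> Pol"
    and "{x \<in> space \<rho>l. \<Phi> False (fst x) = snd x} \<in> sets \<rho>l"
    and "\<beta> > 0" and "C > 1" and "0 < \<xi>" and "\<xi> \<le> C - 1"
    and "lamstar \<in> optimal_duals \<rho> \<rho>l \<rho>u \<Phi> c C \<beta> Pol"
  shows "0 \<le> lamstar \<and>
         lamstar \<le> (dual_fun \<rho> \<rho>l \<rho>u \<Phi> c C \<beta> Pol lamstar
                 - measure \<rho>l {x \<in> space \<rho>l. \<Phi> False (fst x) = snd x}) / \<xi>
         \<and> bounded (optimal_duals \<rho> \<rho>l \<rho>u \<Phi> c C \<beta> Pol)"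
proof -
  let ?P = "measure \<rho>l {x \<in> space \<rho>l. \<Phi> False (fst x) = snd x}"
  let ?D = "dual_fun \<rho> \<rho>l \<rho>u \<Phi> c C \<beta> Pol"
  have key: "lam \<le> (?D lam - ?P) / \<xi>" if lam0: "0 \<le> lam" for lam
  proof -
    have bdd: "bdd_above ((\<lambda>\<pi>. lagrangian \<rho> \<rho>l \<rho>u \<Phi> c C \<beta> \<pi> lam) ` Pol)"
      using lag_bound[OF assms(1,2,4) _ lam0 assms(9)] assms(6)
      by (intro bdd_aboveI[where M="1 + lam * C + \<beta> * (1 + 1/2 * lam\<^sup>2)"]) auto
    have "lagrangian \<rho> \<rho>l \<rho>u \<Phi> c C \<beta> pi0 lam \<le> ?D lam"
      unfolding dual_fun_def by (rule cSUP_upper[OF assms(7) bdd])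
    then have "?P - lam * (1 - C) + \<beta> * (1/2 * lam\<^sup>2) \<le> ?D lam"
      using lag_pi0[of \<rho> \<rho>l \<rho>u c \<Phi>, OF assms(1,2,3,5,8)] by simp
    moreover have "0 \<le> \<beta> * (1/2 * lam\<^sup>2)" using assms(9) by simp
    moreover have "lam * \<xi> \<le> lam * (C - 1)" using lam0 assms(12) by (intro mult_left_mono) auto
    ultimately have "lam * \<xi> \<le> ?D lam - ?P" by (simp add: algebra_simps)
    then show ?thesis using assms(11) by (simp add: pos_le_divide_eq)
  qed
  have ls: "0 \<le> lamstar" "\<And>\<mu>. 0 \<le> \<mu> \<Longrightarrow> ?D lamstar \<le> ?D \<mu>"
    using assms(13) unfolding optimal_duals_def by auto
  have sub: "optimal_duals \<rho> \<rho>l \<rho>u \<Phi> c C \<beta> Pol \<subseteq> {0 .. (?D lamstar - ?P) / \<xi>}"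
  proof
    fix lam assume "lam \<in> optimal_duals \<rho> \<rho>l \<rho>u \<Phi> c C \<beta> Pol"
    then have l: "0 \<le> lam" "?D lam \<le> ?D lamstar" using ls(1) unfolding optimal_duals_def by auto
    have "?D lamstar \<le> ?D lam" using ls(2) l(1) .
    then have "?D lam = ?D lamstar" using l(2) by simp
    then show "lam \<in> {0 .. (?D lamstar - ?P) / \<xi>}" using key[OF l(1)] l(1) by simp
  qed
  have "bounded (optimal_duals \<rho> \<rho>l \<rho>u \<Phi> c C \<beta> Pol)"
    by (rule bounded_subset[OF bounded_closed_interval sub])
  then show ?thesis using ls(1) key[OF ls(1)] by simp
qed

end
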